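(* Let $A$ be a finite set, $\rho\subseteq A^n$, $(a_1,\dots,a_n)\in A^n\setminus\rho$, and $b_1,\dots,b_n\in A$ with $b_i\neq a_i$ for all $i$, such that $$(\{a_1,b_1\}\times\{a_2,b_2\}\times\dots\times\{a_n,b_n\})\setminus\{(a_1,\dots,a_n)\}\subseteq\rho.$$ Then $\rho$ is a key relation and $(a_1,\dots,a_n)$ is a key tuple for $\rho$.
   Context: A unary vector-function is a tuple $\Psi=(\psi_1,\dots,\psi_n)$ of maps $\psi_i:A\to A$ acting coordinatewise; it preserves $\rho$ if $\Psi(\rho)\subseteq\rho$. $\rho\subseteq A^n$ is a key relation if there is $\beta\in A^n\setminus\rho$ (a key tuple) such that every $\alpha\in A^n\setminus\rho$ is mapped to $\beta$ by some unary vector-function preserving $\rho$. *)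

theory Defs
  imports Main
begin

definition tuples :: "'a set \<Rightarrow> nat \<Rightarrow> 'a list set" where
  "tuples A n = {xs. length xs = n \<and> set xs \<subseteq> A}"

definition unary_vf :: "'a set \<Rightarrow> nat \<Rightarrow> (nat \<Rightarrow> 'a \<Rightarrow> 'a) \<Rightarrow> bool" where
  "unary_vf A n \<Psi> \<longleftrightarrow> (\<forall>i<n. \<forall>x\<in>A. \<Psi> i x \<in> A)"

definition apply_vf :: "(nat \<Rightarrow> 'a \<Rightarrow> 'a) \<Rightarrow> 'a list \<Rightarrow> 'a list" where
  "apply_vf \<Psi> xs = map (\<lambda>i. \<Psi> i (xs ! i)) [0..<length xs]"

definition preserves_vf :: "(nat \<Rightarrow> 'a \<Rightarrow> 'a) \<Rightarrow> 'a list set \<Rightarrow> bool" where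
  "preserves_vf \<Psi> \<rho> \<longleftrightarrow> apply_vf \<Psi> ` \<rho> \<subseteq> \<rho>"

definition key_tuple :: "'a set \<Rightarrow> nat \<Rightarrow> 'a list set \<Rightarrow> 'a list \<Rightarrow> bool" where
  "key_tuple A n \<rho> \<beta> \<longleftrightarrow> \<beta> \<in> tuples A n - \<rho> \<and>
     (\<forall>\<alpha> \<in> tuples A n - \<rho>. \<exists>\<Psi>. unary_vf A n \<Psi> \<and> preserves_vf \<Psi> \<rho> \<and> apply_vf \<Psi> \<alpha> = \<beta>)"

definition key_relation :: "'a set \<Rightarrow> nat \<Rightarrow> 'a list set \<Rightarrow> bool" where
  "key_relation A n \<rho> \<longleftrightarrow> \<rho> \<subseteq> tuples A n \<and> (\<exists>\<beta>. key_tuple A n \<rho> \<beta>)"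

end

theory Submission
  imports Defs
begin

lemma apply_vf_len[simp]: "length (apply_vf P xs) = length xs"
  by (simp add: apply_vf_def)

lemma apply_vf_nth[simp]: "i < length xs \<Longrightarrow> apply_vf P xs ! i = P i (xs ! i)"
  by (simp add: apply_vf_def)

theorem mainTheorem5:
  fixes A :: "'x set" and n :: nat and \<rho> :: "'x list set" and a b :: "'x list"
  assumes "finite A"
    and "\<rho> \<subseteq> tuples A n"
    and "a \<in> tuples A n" and "a \<notin> \<rho>"
    and "b \<in> tuples A n"
    and "\<forall>i<n. b ! i \<noteq> a ! i"
    and "{xs \<in> tuples A n. \<forall>i<n. xs ! i \<in> {a ! i, b ! i}} - {a} \<subseteq> \<rho>"
  shows "key_relation A n \<rho> \<and> key_tuple A n \<rho> a"
proof -
  have la: "length a = n" "set a \<subseteq> A" using assms(3) by (auto simp: tuples_def)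
  have lb: "length b = n" "set b \<subseteq> A" using assms(5) by (auto simp: tuples_def)
  have key: "key_tuple A n \<rho> a"
    unfolding key_tuple_def
  proof (intro conjI ballI)
    show "a \<in> tuples A n - \<rho>" using assms(3,4) by simp
  next
    fix \<alpha> assume \<alpha>: "\<alpha> \<in> tuples A n - \<rho>"
    have lal: "length \<alpha> = n" using \<alpha> by (auto simp: tuples_def)
    define P where "P = (\<lambda>i x. if x = \<alpha> ! i then a ! i else b ! i)"
    have uv: "unary_vf A n P"
      unfolding unary_vf_def P_def using la lb by (auto simp: nth_mem subsetD)
    have ap: "apply_vf P \<alpha> = a"
      by (rule nth_equalityI) (auto simp: lal la P_def)
    have pr: "preserves_vf P \<rho>"
      unfolding preserves_vf_def
    proof clarify
      fix x assume x: "x \<in> \<rho>"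
      have lx: "length x = n" "set x \<subseteq> A" using x assms(2) by (auto simp: tuples_def)
      have inT: "apply_vf P x \<in> tuples A n"
        unfolding tuples_def using lx la lb
        by (auto simp: in_set_conv_nth P_def) (metis nth_mem subsetD)+
      have inB: "\<forall>i<n. apply_vf P x ! i \<in> {a ! i, b ! i}"
        using lx by (auto simp: P_def)
      have "apply_vf P x \<noteq> a"
      proof
        assume eq: "apply_vf P x = a"
        have "x = \<alpha>"
        proof (rule nth_equalityI)
          show "length x = length \<alpha>" using lx lal by simp
          fix i assume i: "i < length x"
          have "apply_vf P x ! i = a ! i" using eq by simp
          then show "x ! i = \<alpha> ! i" using i lx assms(6)
            by (auto simp: P_def split: if_splits)
        qed
        then show False using x \<alpha> by simp
      qed
      then show "apply_vf P x \<in> \<rho>" using assms(7) inT inB by blast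
    qed
    show "\<exists>\<Psi>. unary_vf A n \<Psi> \<and> preserves_vf \<Psi> \<rho> \<and> apply_vf \<Psi> \<alpha> = a"
      using uv pr ap by blast
  qed
  show ?thesis using key assms(2) by (auto simp: key_relation_def)
qed

end
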